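(* Let $\nu:[0,1] \to \mathbb{R}$ be continuous with $\nu(x) > 0$ for all $x\in[0,1]$. Let $f:[0,1] \to \mathbb{R}$ be differentiable with vanishing weighted mean, $\int_0^1 f(x)\nu(x)\,dx = 0$. Then $$\int_{0}^{1}|f(x)|\,\nu(x)\, dx \leq \left(\max_{0 \leq x \leq 1}\frac{2}{\nu(x)}\,\frac{\left(\int_{0}^{x}\nu(z)\,dz\right)\left(\int_{x}^{1}\nu(z)\,dz\right)}{\int_{0}^{1}\nu(z)\,dz}\right)\int_{0}^{1}|f'(x)|\,\nu(x)\, dx,$$ and the constant is sharp: for the given weight $\nu$, no smaller constant makes this inequality hold for all such $f$. *)

theory Defs
  imports "HOL-Analysis.Analysis"
begin

text \<open>For continuous positive nu the
  function is continuous on the compact interval, so the supremum is attained (a max).\<close>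
definition weight_const :: "(real \<Rightarrow> real) \<Rightarrow> real" where
  "weight_const \<nu> = (SUP x\<in>{0..1}. 2 / \<nu> x *
      ((integral {0..x} \<nu>) * (integral {x..1} \<nu>)) / integral {0..1} \<nu>)"

definition admissible :: "(real \<Rightarrow> real) \<Rightarrow> (real \<Rightarrow> real) \<Rightarrow> (real \<Rightarrow> real) \<Rightarrow> bool" where
  "admissible \<nu> f f' \<longleftrightarrow>
     (\<forall>x\<in>{0..1}. (f has_real_derivative f' x) (at x within {0..1})) \<and>
     integral {0..1} (\<lambda>x. f x * \<nu> x) = 0"

text \<open>The inequality with constant C. The right-hand integral is taken as a
  nonnegative Lebesgue integral (possibly infinite), since f' need not be integrable.\<close>
definition poincare_ineq :: "(real \<Rightarrow> real) \<Rightarrow> real \<Rightarrow> (real \<Rightarrow> real) \<Rightarrow> (real \<Rightarrow> real) \<Rightarrow> bool" where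
  "poincare_ineq \<nu> C f f' \<longleftrightarrow>
     ennreal (integral {0..1} (\<lambda>x. \<bar>f x\<bar> * \<nu> x))
       \<le> ennreal C * (\<integral>\<^sup>+ x\<in>{0..1}. ennreal (\<bar>f' x\<bar> * \<nu> x) \<partial>lborel)"

end

theory Submission
  imports Defs
begin



lemma seq_deriv:
  assumes d: "(f has_real_derivative D) (at x within S)"
    and y: "y \<longlonglongrightarrow> x" and ev: "eventually (\<lambda>n. y n \<in> S \<and> y n \<noteq> x) sequentially"
  shows "(\<lambda>n. (f (y n) - f x) / (y n - x)) \<longlonglongrightarrow> D"
proof -
  have "filterlim y (at x within S) sequentially" using y ev by (simp add: filterlim_at)
  from filterlim_compose[OF d[unfolded has_field_derivative_iff] this] show ?thesis by (simp add: o_def)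
qed

lemma deriv_borel:
  fixes f f' :: "real \<Rightarrow> real"
  assumes d: "\<forall>x\<in>{0..1}. (f has_real_derivative f' x) (at x within {0..1})"
  shows "(\<lambda>t. indicator {0..1} t * f' t) \<in> borel_measurable borel"
proof -
  define fc where "fc x = f (max 0 (min 1 x))" for x
  have cf: "continuous_on {0..1} f"
    using d DERIV_continuous continuous_on_eq_continuous_within by blast
  have cfc: "continuous_on UNIV fc"
    unfolding fc_def
    by (rule continuous_on_compose2[OF cf]) (auto intro!: continuous_intros)
  define h1 where "h1 n x = (fc (x + 1 / Suc n) - fc x) * Suc n" for n x
  define h2 where "h2 n x = (fc x - fc (x - 1 / Suc n)) * Suc n" for n x
  have [measurable]: "h1 n \<in> borel_measurable borel" for n
    unfolding h1_def by (rule borel_measurable_continuous_onI)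
       (intro continuous_intros continuous_on_compose2[OF cfc]; auto)
  have [measurable]: "h2 n \<in> borel_measurable borel" for n
    unfolding h2_def by (rule borel_measurable_continuous_onI)
       (intro continuous_intros continuous_on_compose2[OF cfc]; auto)
  define u where "u n x = indicator {0..1} x * (if x < 1 then h1 n x else h2 n x)" for n x
  have um: "u n \<in> borel_measurable borel" for n unfolding u_def by measurable
  have lim0: "(\<lambda>n. 1 / real (Suc n)) \<longlonglongrightarrow> 0"
    using LIMSEQ_inverse_real_of_nat by (simp add: inverse_eq_divide)
  have conv: "(\<lambda>n. u n x) \<longlonglongrightarrow> indicator {0..1} x * f' x" for x
  proof (cases "x \<in> {0..1}")
    case False then show ?thesis by (simp add: u_def)
  next
    case True
    show ?thesis
    proof (cases "x < 1")
      case lt: True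
      define y where "y n = x + 1 / real (Suc n)" for n
      have y: "y \<longlonglongrightarrow> x" unfolding y_def using tendsto_add[OF tendsto_const lim0, of x] by simp
      have ev: "eventually (\<lambda>n. y n \<in> {0..1}) sequentially"
      proof -
        have "eventually (\<lambda>n. 1 / real (Suc n) < 1 - x) sequentially"
          using lim0 lt by (simp add: order_tendsto_iff)
        then show ?thesis
          by eventually_elim (use True in \<open>auto simp: y_def\<close>)
      qed
      have ev2: "eventually (\<lambda>n. y n \<in> {0..1} \<and> y n \<noteq> x) sequentially"
        using ev by eventually_elim (auto simp: y_def)
      have L: "(\<lambda>n. (f (y n) - f x) / (y n - x)) \<longlonglongrightarrow> f' x"
        by (rule seq_deriv[OF _ y ev2]) (use d True in auto)
      have "eventually (\<lambda>n. (f (y n) - f x) / (y n - x) = u n x) sequentially"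
        using ev2
      proof eventually_elim
        case (elim n)
        then have "y n \<le> 1" "0 \<le> y n" by auto
        then show ?case using True lt
          by (auto simp: u_def h1_def fc_def y_def max_def min_def)
      qed
      from tendsto_cong[THEN iffD1, OF this L] True show ?thesis by simp
    next
      case ge: False
      then have x1: "x = 1" using True by auto
      define y where "y n = 1 - 1 / real (Suc n)" for n
      have y: "y \<longlonglongrightarrow> x" unfolding y_def x1 using tendsto_diff[OF tendsto_const lim0, of 1] by simp
      have ev2: "eventually (\<lambda>n. y n \<in> {0..1} \<and> y n \<noteq> x) sequentially"
        by (rule always_eventually) (auto simp: y_def x1 divide_simps)
      have L: "(\<lambda>n. (f (y n) - f x) / (y n - x)) \<longlonglongrightarrow> f' x"
        by (rule seq_deriv[OF _ y ev2]) (use d True in auto)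
      have "eventually (\<lambda>n. (f (y n) - f x) / (y n - x) = u n x) sequentially"
        by (rule always_eventually)
          (auto simp: u_def h2_def fc_def y_def x1 max_def min_def divide_simps algebra_simps)
      from tendsto_cong[THEN iffD1, OF this L] True show ?thesis by simp
    qed
  qed
  show ?thesis by (rule borel_measurable_LIMSEQ_real[OF conv um]) 
qed



lemma abs_integral_le_nn:
  fixes g :: "real \<Rightarrow> real"
  assumes gi: "g integrable_on {a..b}"
    and gm: "(\<lambda>t. indicator {a..b} t * g t) \<in> borel_measurable borel"
  shows "ennreal \<bar>integral {a..b} g\<bar> \<le> (\<integral>\<^sup>+t. ennreal (indicator {a..b} t * \<bar>g t\<bar>) \<partial>lborel)"
proof -
  define G where "G t = indicator {a..b} t * g t" for t
  have nG: "ennreal (norm (G t)) = ennreal (indicator {a..b} t * \<bar>g t\<bar>)" for t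
    by (auto simp: G_def indicator_def)
  have Gm: "G \<in> borel_measurable lborel" using gm unfolding G_def by simp
  show ?thesis
  proof (cases "(\<integral>\<^sup>+t. ennreal (indicator {a..b} t * \<bar>g t\<bar>) \<partial>lborel) = \<infinity>")
    case True then show ?thesis by simp
  next
    case False
    then have fin: "(\<integral>\<^sup>+t. ennreal (norm (G t)) \<partial>lborel) < \<infinity>"
      using nG[unfolded real_norm_def] by (simp add: top.not_eq_extremum)
    have ig: "integrable lborel G" by (rule integrableI_bounded[OF Gm fin])
    have h1: "(G has_integral integral\<^sup>L lborel G) UNIV" by (rule has_integral_integral_lborel[OF ig])
    have "G = (\<lambda>x. if x \<in> {a..b} then g x else 0)" by (auto simp: G_def indicator_def)
    then have "(G has_integral integral {a..b} g) UNIV"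
      using has_integral_restrict_UNIV[of "{a..b}" g] integrable_integral[OF gi] by simp
    then have eq: "integral {a..b} g = integral\<^sup>L lborel G" using h1 has_integral_unique by blast
    have "\<bar>integral {a..b} g\<bar> \<le> (LINT x|lborel. \<bar>G x\<bar>)" unfolding eq by (rule integral_abs_bound)
    then have "ennreal \<bar>integral {a..b} g\<bar> \<le> ennreal (LINT x|lborel. \<bar>G x\<bar>)" by simp
    also have "\<dots> = (\<integral>\<^sup>+t. ennreal \<bar>G t\<bar> \<partial>lborel)"
      by (rule nn_integral_eq_integral[symmetric]) (use ig in auto)
    also have "\<dots> = (\<integral>\<^sup>+t. ennreal (indicator {a..b} t * \<bar>g t\<bar>) \<partial>lborel)"
      using nG[unfolded real_norm_def] by simp
    finally show ?thesis .
  qed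
qed



definition NN :: "(real \<Rightarrow> real) \<Rightarrow> real \<Rightarrow> real" where
  "NN \<nu> x = integral {0..x} \<nu>"

locale wt =
  fixes \<nu> :: "real \<Rightarrow> real"
  assumes cont: "continuous_on {0..1} \<nu>"
    and pos: "\<forall>x\<in>{0..1}. \<nu> x > 0"
begin

lemma nu_int: "0 \<le> a \<Longrightarrow> b \<le> 1 \<Longrightarrow> \<nu> integrable_on {a..b}"
  by (rule integrable_continuous_interval) (auto intro: continuous_on_subset[OF cont])

lemma NN_deriv: "x \<in> {0..1} \<Longrightarrow> (NN \<nu> has_real_derivative \<nu> x) (at x within {0..1})"
  unfolding NN_def using integral_has_real_derivative[OF cont] by blast

lemma NN_cont: "continuous_on {0..1} (NN \<nu>)"
  using NN_deriv DERIV_continuous continuous_on_eq_continuous_within by blast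

lemma NN0: "NN \<nu> 0 = 0" by (simp add: NN_def)

lemma int_x1: "x \<in> {0..1} \<Longrightarrow> integral {x..1} \<nu> = NN \<nu> 1 - NN \<nu> x"
  unfolding NN_def using Henstock_Kurzweil_Integration.integral_combine[of 0 x 1 \<nu>] nu_int[of 0 1] by auto

lemma nu_min: obtains m where "m > 0" "\<And>x. x \<in> {0..1} \<Longrightarrow> m \<le> \<nu> x"
proof -
  obtain x0 where "x0 \<in> {0..1}" "\<forall>y\<in>{0..1}. \<nu> x0 \<le> \<nu> y"
    using continuous_attains_inf[OF compact_Icc _ cont] by auto
  then show ?thesis using pos by (intro that[of "\<nu> x0"]) auto
qed

lemma nu_max: obtains V where "\<And>x. x \<in> {0..1} \<Longrightarrow> \<nu> x \<le> V"
proof -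
  obtain x0 where "x0 \<in> {0..1}" "\<forall>y\<in>{0..1}. \<nu> y \<le> \<nu> x0"
    using continuous_attains_sup[OF compact_Icc _ cont] by auto
  then show ?thesis by (intro that[of "\<nu> x0"]) auto
qed

lemma int_ge: assumes "0 \<le> a" "a \<le> b" "b \<le> 1" "m > 0" "\<And>x. x \<in> {0..1} \<Longrightarrow> m \<le> \<nu> x"
  shows "m * (b - a) \<le> integral {a..b} \<nu>"
proof -
  have "integral {a..b} (\<lambda>x. m) \<le> integral {a..b} \<nu>"
    by (rule integral_le) (use assms nu_int in auto)
  then show ?thesis using assms by (simp add: mult.commute)
qed

lemma NN_pos: "x \<in> {0<..1} \<Longrightarrow> NN \<nu> x > 0"
proof -
  assume x: "x \<in> {0<..1}"
  obtain m where m: "m > 0" "\<And>x. x \<in> {0..1} \<Longrightarrow> m \<le> \<nu> x" using nu_min by blast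
  have "m * (x - 0) \<le> NN \<nu> x" unfolding NN_def by (rule int_ge) (use x m in auto)
  moreover have "m * (x - 0) > 0" using x m by auto
  ultimately show ?thesis by linarith
qed

lemma NN_lt: "x \<in> {0..<1} \<Longrightarrow> NN \<nu> x < NN \<nu> 1"
proof -
  assume x: "x \<in> {0..<1}"
  obtain m where m: "m > 0" "\<And>x. x \<in> {0..1} \<Longrightarrow> m \<le> \<nu> x" using nu_min by blast
  have "m * (1 - x) \<le> integral {x..1} \<nu>" by (rule int_ge) (use x m in auto)
  moreover have "m * (1 - x) > 0" using x m by auto
  ultimately show ?thesis using int_x1[of x] x by auto
qed

lemma NN_mono: "x \<in> {0..1} \<Longrightarrow> y \<in> {0..1} \<Longrightarrow> x \<le> y \<Longrightarrow> NN \<nu> x \<le> NN \<nu> y"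
proof -
  assume a: "x \<in> {0..1}" "y \<in> {0..1}" "x \<le> y"
  have "0 \<le> integral {x..y} \<nu>"
    by (rule integral_nonneg) (use a pos nu_int in \<open>auto simp: less_imp_le\<close>)
  moreover have "integral {0..x} \<nu> + integral {x..y} \<nu> = integral {0..y} \<nu>"
    using Henstock_Kurzweil_Integration.integral_combine[of 0 x y \<nu>] nu_int[of 0 y] a by auto
  ultimately show ?thesis unfolding NN_def by linarith
qed

lemma adm_cont: assumes "admissible \<nu> f f'" shows "continuous_on {0..1} f"
  using assms unfolding admissible_def
  using DERIV_continuous continuous_on_eq_continuous_within by blast

lemma fnu_int: assumes "admissible \<nu> f f'" "0 \<le> a" "b \<le> 1"
  shows "(\<lambda>t. f t * \<nu> t) integrable_on {a..b}"
  by (rule integrable_continuous_interval)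
     (use assms in \<open>auto intro!: continuous_intros intro: continuous_on_subset[OF cont] continuous_on_subset[OF adm_cont[OF assms(1)]]\<close>)

lemma rep1: assumes adm: "admissible \<nu> f f'" and x: "x \<in> {0..1}"
  shows "((\<lambda>t. f' t * NN \<nu> t) has_integral (f x * NN \<nu> x - integral {0..x} (\<lambda>t. f t * \<nu> t))) {0..x}"
proof -
  have d: "((\<lambda>t. f t * NN \<nu> t) has_vector_derivative (f' t * NN \<nu> t + f t * \<nu> t)) (at t within {0..x})"
    if t: "t \<in> {0..x}" for t
  proof -
    have t1: "t \<in> {0..1}" using t x by auto
    have "((\<lambda>t. f t * NN \<nu> t) has_real_derivative (f' t * NN \<nu> t + f t * \<nu> t)) (at t within {0..1})"
      using DERIV_mult[OF _ NN_deriv[OF t1], of f "f' t"] adm t1 unfolding admissible_def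
      by (auto simp: algebra_simps)
    then show ?thesis using x
      by (auto simp: has_real_derivative_iff_has_vector_derivative intro: has_vector_derivative_within_subset)
  qed
  have "((\<lambda>t. f' t * NN \<nu> t + f t * \<nu> t) has_integral (f x * NN \<nu> x - f 0 * NN \<nu> 0)) {0..x}"
    by (rule fundamental_theorem_of_calculus) (use x d in auto)
  from has_integral_diff[OF this integrable_integral[OF fnu_int[OF adm, of 0 x]]] x
  show ?thesis by (simp add: NN0)
qed

lemma rep2: assumes adm: "admissible \<nu> f f'" and x: "x \<in> {0..1}"
  shows "((\<lambda>t. f' t * (NN \<nu> 1 - NN \<nu> t)) has_integral (- f x * (NN \<nu> 1 - NN \<nu> x) + integral {x..1} (\<lambda>t. f t * \<nu> t))) {x..1}"
proof -
  have d: "((\<lambda>t. f t * (NN \<nu> 1 - NN \<nu> t)) has_vector_derivative (f' t * (NN \<nu> 1 - NN \<nu> t) - f t * \<nu> t)) (at t within {x..1})"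
    if t: "t \<in> {x..1}" for t
  proof -
    have t1: "t \<in> {0..1}" using t x by auto
    have "((\<lambda>t. f t * (NN \<nu> 1 - NN \<nu> t)) has_real_derivative (f' t * (NN \<nu> 1 - NN \<nu> t) - f t * \<nu> t)) (at t within {0..1})"
      using DERIV_mult[OF _ DERIV_diff[OF DERIV_const[of "NN \<nu> 1"] NN_deriv[OF t1]], of f "f' t"] adm t1 unfolding admissible_def
      by (auto simp: algebra_simps)
    then show ?thesis using x
      by (auto simp: has_real_derivative_iff_has_vector_derivative intro: has_vector_derivative_within_subset)
  qed
  have "((\<lambda>t. f' t * (NN \<nu> 1 - NN \<nu> t) - f t * \<nu> t) has_integral (f 1 * (NN \<nu> 1 - NN \<nu> 1) - f x * (NN \<nu> 1 - NN \<nu> x))) {x..1}"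
    by (rule fundamental_theorem_of_calculus) (use x d in auto)
  from has_integral_add[OF this integrable_integral[OF fnu_int[OF adm, of x 1]]] x
  show ?thesis by simp
qed

lemma rep: assumes adm: "admissible \<nu> f f'" and x: "x \<in> {0..1}"
  shows "NN \<nu> 1 * f x = integral {0..x} (\<lambda>t. f' t * NN \<nu> t) - integral {x..1} (\<lambda>t. f' t * (NN \<nu> 1 - NN \<nu> t))"
proof -
  have "integral {0..x} (\<lambda>t. f t * \<nu> t) + integral {x..1} (\<lambda>t. f t * \<nu> t) = 0"
    using Henstock_Kurzweil_Integration.integral_combine[of 0 x 1, OF _ _ fnu_int[OF adm, of 0 1]] x adm
    unfolding admissible_def by auto
  then show ?thesis using integral_unique[OF rep1[OF adm x]] integral_unique[OF rep2[OF adm x]]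
    by (simp add: algebra_simps)
qed

end


definition cub :: "real \<Rightarrow> real \<Rightarrow> real \<Rightarrow> real" where "cub a b x = 3 * ((x - a) / (b - a))^2 - 2 * ((x - a) / (b - a))^3"
definition cubd :: "real \<Rightarrow> real \<Rightarrow> real \<Rightarrow> real" where "cubd a b x = 6 * ((x - a) / (b - a)) * (1 - (x - a) / (b - a)) / (b - a)"
definition stp :: "real \<Rightarrow> real \<Rightarrow> real \<Rightarrow> real" where "stp a b x = (if x \<in> {..a} then 0 else (if x \<in> {..b} then cub a b x else 1))"
definition stpd :: "real \<Rightarrow> real \<Rightarrow> real \<Rightarrow> real" where "stpd a b x = (if x \<in> {..a} then 0 else (if x \<in> {..b} then cubd a b x else 0))"

lemma cub_deriv: assumes "a < b" shows "(cub a b has_real_derivative cubd a b x) (at x)"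
proof -
  have s: "((\<lambda>x. (x-a)/(b-a)) has_real_derivative 1/(b-a)) (at x)"
    using assms by (auto intro!: derivative_eq_intros)
  have p: "((\<lambda>s. 3 * s^2 - 2 * s^3) has_real_derivative (6 * s0 - 6 * s0^2)) (at s0)" for s0 :: real
    by (auto intro!: derivative_eq_intros simp: power2_eq_square)
  have ch: "((\<lambda>s. 3 * s^2 - 2 * s^3) \<circ> (\<lambda>x. (x-a)/(b-a)) has_real_derivative
      (6*((x-a)/(b-a)) - 6*((x-a)/(b-a))^2) * (1/(b-a))) (at x)"
    by (rule DERIV_chain[OF p s])
  have gen: "(6 * s - 6 * s^2) * (1/d) = 6 * s * (1 - s) / d" for s d :: real
    by (simp add: power2_eq_square field_simps)
  show ?thesis unfolding cub_def cubd_def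
    by (rule DERIV_cong[OF _ gen]) (use ch in \<open>simp add: o_def\<close>)
qed

lemma G_deriv:
  assumes ab: "a < b"
  shows "((\<lambda>x. if x \<in> {..b} then cub a b x else 1) has_derivative
      (if x \<in> {..b} then (\<lambda>h. h * cubd a b x) else (\<lambda>h. h * 0))) (at x)"
proof -
  have "((\<lambda>x. if x \<in> {..b} then cub a b x else 1) has_derivative
      (if x \<in> {..b} then (\<lambda>h. h * cubd a b x) else (\<lambda>h. h * 0))) (at x within ({..b} \<union> {b<..}))"
  proof (rule has_derivative_If_within_closures)
    show "((cub a b) has_derivative (\<lambda>h. h * cubd a b x)) (at x within {..b} \<union> (closure {..b} \<inter> closure {b<..}))"
    proof -
      have e: "(\<lambda>h. h * cubd a b x) = (*) (cubd a b x)" by (auto simp: fun_eq_iff)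
      show ?thesis using cub_deriv[OF ab, of x] unfolding has_field_derivative_def e
        by (auto intro: has_derivative_at_withinI)
    qed
    show "((\<lambda>x. 1) has_derivative (\<lambda>h. h * 0)) (at x within {b<..} \<union> (closure {..b} \<inter> closure {b<..}))"
      by (auto intro: derivative_eq_intros)
    show "x \<in> closure {..b} \<Longrightarrow> x \<in> closure {b<..} \<Longrightarrow> cub a b x = 1"
      using ab by (auto simp: cub_def)
    show "x \<in> closure {..b} \<Longrightarrow> x \<in> closure {b<..} \<Longrightarrow> (\<lambda>h. h * cubd a b x) = (\<lambda>h. h * 0)"
      using ab by (auto simp: cubd_def)
  qed auto
  moreover have "{..b} \<union> {b<..} = (UNIV::real set)" by auto
  ultimately show ?thesis by simp
qed

lemma stp_deriv:
  assumes ab: "a < b"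
  shows "(stp a b has_real_derivative stpd a b x) (at x)"
proof -
  have "(stp a b has_derivative
      (if x \<in> {..a} then (\<lambda>h. h * 0) else (if x \<in> {..b} then (\<lambda>h. h * cubd a b x) else (\<lambda>h. h * 0)))) (at x within ({..a} \<union> {a<..}))"
    unfolding stp_def
  proof (rule has_derivative_If_within_closures)
    show "((\<lambda>x. 0) has_derivative (\<lambda>h. h * 0)) (at x within {..a} \<union> (closure {..a} \<inter> closure {a<..}))"
      by (auto intro: derivative_eq_intros)
    show "((\<lambda>x. if x \<in> {..b} then cub a b x else 1) has_derivative
      (if x \<in> {..b} then (\<lambda>h. h * cubd a b x) else (\<lambda>h. h * 0))) (at x within {a<..} \<union> (closure {..a} \<inter> closure {a<..}))"
      using G_deriv[OF ab, of x] by (auto intro: has_derivative_at_withinI)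
    show "x \<in> closure {..a} \<Longrightarrow> x \<in> closure {a<..} \<Longrightarrow> 0 = (if x \<in> {..b} then cub a b x else 1)"
      using ab by (auto simp: cub_def)
    show "x \<in> closure {..a} \<Longrightarrow> x \<in> closure {a<..} \<Longrightarrow> (\<lambda>h. h * 0) = (if x \<in> {..b} then (\<lambda>h. h * cubd a b x) else (\<lambda>h. h * 0))"
      using ab by (auto simp: cubd_def)
  qed auto
  moreover have "{..a} \<union> {a<..} = (UNIV::real set)" by auto
  ultimately show ?thesis unfolding has_field_derivative_def stpd_def
    by (auto elim!: has_derivative_eq_rhs split: if_splits)
qed

lemma stp_range: "a < b \<Longrightarrow> 0 \<le> stp a b x \<and> stp a b x \<le> 1"
proof -
  assume ab: "a < b"
  { assume x: "a < x" "x \<le> b"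
    define s where "s = (x - a) / (b - a)"
    have s: "0 \<le> s" "s \<le> 1" using x ab by (auto simp: s_def field_simps)
    have "cub a b x = 3 * s^2 - 2 * s^3" by (simp add: cub_def s_def)
    also have "\<dots> = s^2 * (3 - 2 * s)" by (simp add: power2_eq_square power3_eq_cube algebra_simps)
    finally have "cub a b x = s^2 * (3 - 2 * s)" .
    moreover have "1 - s^2 * (3 - 2 * s) = (1 - s)^2 * (1 + 2 * s)" by (simp add: power2_eq_square algebra_simps)
    ultimately have "0 \<le> cub a b x \<and> cub a b x \<le> 1" using s
      by (smt (verit) mult_nonneg_nonneg zero_le_power2)
  }
  then show ?thesis by (auto simp: stp_def)
qed

lemma stpd_nonneg: assumes ab: "a < b" shows "0 \<le> stpd a b x"
proof -
  { assume x: "a < x" "x \<le> b"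
    define s where "s = (x - a) / (b - a)"
    have s: "0 \<le> s" "s \<le> 1" using x ab by (auto simp: s_def field_simps)
    have "cubd a b x = 6 * s * (1 - s) / (b - a)" by (simp add: cubd_def s_def)
    then have "0 \<le> cubd a b x" using s ab by simp
  }
  then show ?thesis by (auto simp: stpd_def)
qed

lemma stp_le: "x \<le> a \<Longrightarrow> stp a b x = 0" by (simp add: stp_def)
lemma stp_a: "stp a b a = 0" by (simp add: stp_le)
lemma stp_ge: "b \<le> x \<Longrightarrow> a < b \<Longrightarrow> stp a b x = 1" by (auto simp: stp_def cub_def)
lemma stp_b: "a < b \<Longrightarrow> stp a b b = 1" by (simp add: stp_ge)
lemma stpd_out: "x \<notin> {a..b} \<Longrightarrow> stpd a b x = 0" by (auto simp: stpd_def)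



context wt begin

abbreviation "M \<equiv> NN \<nu> 1"
definition "Nb t = indicator {0..1} t * NN \<nu> t"
definition "nub t = indicator {0..1} t * \<nu> t"
definition "kern x t = indicator {0..x} t * Nb t + indicator {x..1} t * (M - Nb t)"

lemma Nb_borel[measurable]: "Nb \<in> borel_measurable borel"
  unfolding Nb_def using borel_measurable_continuous_on_indicator[OF _ NN_cont] by simp

lemma nub_borel[measurable]: "nub \<in> borel_measurable borel"
  unfolding nub_def using borel_measurable_continuous_on_indicator[OF _ cont] by simp

lemma M_pos: "M > 0" using NN_pos[of 1] by simp

lemma NN_le_M: "t \<in> {0..1} \<Longrightarrow> NN \<nu> t \<le> M" using NN_mono[of t 1] by auto
lemma NN_ge0: "t \<in> {0..1} \<Longrightarrow> 0 \<le> NN \<nu> t" using NN_mono[of 0 t] by (auto simp: NN0)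

lemma pointwise:
  assumes adm: "admissible \<nu> f f'" and x: "x \<in> {0..1}"
  shows "ennreal (M * \<bar>f x\<bar>) \<le> (\<integral>\<^sup>+t. ennreal (\<bar>indicator {0..1} t * f' t\<bar> * kern x t) \<partial>lborel)"
proof -
  have D[measurable]: "(\<lambda>t. indicator {0..1} t * f' t) \<in> borel_measurable borel"
    using deriv_borel adm unfolding admissible_def by blast
  define I1 where "I1 = integral {0..x} (\<lambda>t. f' t * NN \<nu> t)"
  define I2 where "I2 = integral {x..1} (\<lambda>t. f' t * (NN \<nu> 1 - NN \<nu> t))"
  have e: "M * f x = I1 - I2" unfolding I1_def I2_def by (rule rep[OF adm x])
  have m1: "(\<lambda>t. indicator {0..x} t * (f' t * NN \<nu> t)) \<in> borel_measurable borel"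
  proof -
    have "(\<lambda>t. indicator {0..x} t * (f' t * NN \<nu> t)) = (\<lambda>t. indicator {0..x} t * ((indicator {0..1} t * f' t) * Nb t))"
      using x by (auto simp: Nb_def indicator_def fun_eq_iff)
    then show ?thesis by simp
  qed
  have m2: "(\<lambda>t. indicator {x..1} t * (f' t * (NN \<nu> 1 - NN \<nu> t))) \<in> borel_measurable borel"
  proof -
    have "(\<lambda>t. indicator {x..1} t * (f' t * (NN \<nu> 1 - NN \<nu> t))) = (\<lambda>t. indicator {x..1} t * ((indicator {0..1} t * f' t) * (M - Nb t)))"
      using x by (auto simp: Nb_def indicator_def fun_eq_iff)
    then show ?thesis by simp
  qed
  have b1: "ennreal \<bar>I1\<bar> \<le> (\<integral>\<^sup>+t. ennreal (indicator {0..x} t * \<bar>f' t * NN \<nu> t\<bar>) \<partial>lborel)"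
    unfolding I1_def by (rule abs_integral_le_nn[OF has_integral_integrable[OF rep1[OF adm x]] m1])
  have b2: "ennreal \<bar>I2\<bar> \<le> (\<integral>\<^sup>+t. ennreal (indicator {x..1} t * \<bar>f' t * (NN \<nu> 1 - NN \<nu> t)\<bar>) \<partial>lborel)"
    unfolding I2_def by (rule abs_integral_le_nn[OF has_integral_integrable[OF rep2[OF adm x]] m2])
  have "ennreal (M * \<bar>f x\<bar>) \<le> ennreal (\<bar>I1\<bar> + \<bar>I2\<bar>)"
  proof (rule ennreal_leI)
    have "M * \<bar>f x\<bar> = \<bar>M * f x\<bar>" using M_pos by (simp add: abs_mult)
    then show "M * \<bar>f x\<bar> \<le> \<bar>I1\<bar> + \<bar>I2\<bar>" using e by linarith
  qed
  also have "\<dots> = ennreal \<bar>I1\<bar> + ennreal \<bar>I2\<bar>" by (simp add: ennreal_plus)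
  also have "\<dots> \<le> (\<integral>\<^sup>+t. ennreal (indicator {0..x} t * \<bar>f' t * NN \<nu> t\<bar>) \<partial>lborel)
      + (\<integral>\<^sup>+t. ennreal (indicator {x..1} t * \<bar>f' t * (NN \<nu> 1 - NN \<nu> t)\<bar>) \<partial>lborel)"
    by (rule add_mono[OF b1 b2])
  also have "\<dots> = (\<integral>\<^sup>+t. ennreal (indicator {0..x} t * \<bar>f' t * NN \<nu> t\<bar>) + ennreal (indicator {x..1} t * \<bar>f' t * (NN \<nu> 1 - NN \<nu> t)\<bar>) \<partial>lborel)"
  proof (rule nn_integral_add[symmetric])
    have "(\<lambda>t. indicator {0..x} t * \<bar>f' t * NN \<nu> t\<bar>) = (\<lambda>t. \<bar>indicator {0..x} t * (f' t * NN \<nu> t)\<bar>)"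
      by (auto simp: indicator_def fun_eq_iff)
    then have "(\<lambda>t. indicator {0..x} t * \<bar>f' t * NN \<nu> t\<bar>) \<in> borel_measurable borel"
      by (simp only:) (rule borel_measurable_abs[OF m1])
    then show "(\<lambda>t. ennreal (indicator {0..x} t * \<bar>f' t * NN \<nu> t\<bar>)) \<in> borel_measurable lborel"
      by simp
    have "(\<lambda>t. indicator {x..1} t * \<bar>f' t * (NN \<nu> 1 - NN \<nu> t)\<bar>) = (\<lambda>t. \<bar>indicator {x..1} t * (f' t * (NN \<nu> 1 - NN \<nu> t))\<bar>)"
      by (auto simp: indicator_def fun_eq_iff)
    then have "(\<lambda>t. indicator {x..1} t * \<bar>f' t * (NN \<nu> 1 - NN \<nu> t)\<bar>) \<in> borel_measurable borel"
      by (simp only:) (rule borel_measurable_abs[OF m2])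
    then show "(\<lambda>t. ennreal (indicator {x..1} t * \<bar>f' t * (NN \<nu> 1 - NN \<nu> t)\<bar>)) \<in> borel_measurable lborel"
      by simp
  qed
  also have "\<dots> = (\<integral>\<^sup>+t. ennreal (\<bar>indicator {0..1} t * f' t\<bar> * kern x t) \<partial>lborel)"
  proof (rule nn_integral_cong)
    fix t
    show "ennreal (indicator {0..x} t * \<bar>f' t * NN \<nu> t\<bar>) + ennreal (indicator {x..1} t * \<bar>f' t * (NN \<nu> 1 - NN \<nu> t)\<bar>)
        = ennreal (\<bar>indicator {0..1} t * f' t\<bar> * kern x t)"
    proof (cases "t \<in> {0..1}")
      case True
      then have "0 \<le> NN \<nu> t" "NN \<nu> t \<le> M" using NN_ge0 NN_le_M by auto
      then have a: "\<bar>M - NN \<nu> t\<bar> = M - NN \<nu> t" "\<bar>NN \<nu> t\<bar> = NN \<nu> t" by auto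
      show ?thesis using True x \<open>0 \<le> NN \<nu> t\<close> \<open>NN \<nu> t \<le> M\<close>
        by (auto simp: kern_def Nb_def indicator_def abs_mult a ennreal_plus distrib_left)
    next
      case False
      then show ?thesis using x by (auto simp: kern_def Nb_def indicator_def)
    qed
  qed
  finally show ?thesis .
qed

lemma ind_borel[measurable]: "(\<lambda>(x::real,t::real). indicator {0..x} t :: real) \<in> borel_measurable (lborel \<Otimes>\<^sub>M lborel)"
proof -
  have "(\<lambda>(x::real,t::real). indicator {0..x} t :: real) = (\<lambda>p. if 0 \<le> snd p \<and> snd p \<le> fst p then 1 else 0)"
    by (auto simp: indicator_def fun_eq_iff)
  moreover have "(\<lambda>p::real\<times>real. if 0 \<le> snd p \<and> snd p \<le> fst p then 1 else 0 :: real) \<in> borel_measurable (lborel \<Otimes>\<^sub>M lborel)"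
    by measurable
  ultimately show ?thesis by simp
qed

lemma ind_borel2[measurable]: "(\<lambda>(x::real,t::real). indicator {x..1} t :: real) \<in> borel_measurable (lborel \<Otimes>\<^sub>M lborel)"
proof -
  have "(\<lambda>(x::real,t::real). indicator {x..1} t :: real) = (\<lambda>p. if fst p \<le> snd p \<and> snd p \<le> 1 then 1 else 0)"
    by (auto simp: indicator_def fun_eq_iff)
  moreover have "(\<lambda>p::real\<times>real. if fst p \<le> snd p \<and> snd p \<le> 1 then 1 else 0 :: real) \<in> borel_measurable (lborel \<Otimes>\<^sub>M lborel)"
    by measurable
  ultimately show ?thesis by simp
qed

definition "valf t = 2 / \<nu> t * ((integral {0..t} \<nu>) * (integral {t..1} \<nu>)) / integral {0..1} \<nu>"

lemma K_def: "weight_const \<nu> = (SUP t\<in>{0..1}. valf t)"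
  unfolding weight_const_def valf_def ..

lemma valf_eq: "t \<in> {0..1} \<Longrightarrow> valf t * \<nu> t = 2 * NN \<nu> t * (M - NN \<nu> t) / M"
  using pos[rule_format, of t] int_x1[of t] by (auto simp: valf_def NN_def[symmetric])

lemma c1: "continuous_on {0..1} (\<lambda>t. 2 / \<nu> t)"
  by (rule continuous_on_divide[OF continuous_on_const cont]) (use pos in force)

lemma c2: "continuous_on {0..1} (\<lambda>t. 2 / \<nu> t * (NN \<nu> t * (NN \<nu> 1 - NN \<nu> t)) / NN \<nu> 1)"
proof -
  have a: "continuous_on {0..1} (\<lambda>t. 2 / \<nu> t * (NN \<nu> t * (NN \<nu> 1 - NN \<nu> t)))"
    by (intro continuous_on_mult c1 NN_cont continuous_on_diff continuous_on_const)
  show ?thesis by (rule continuous_on_divide[OF a continuous_on_const]) (use M_pos in simp)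
qed

lemma valf_cont: "continuous_on {0..1} valf"
proof -
  have "\<And>t. t \<in> {0..1} \<Longrightarrow> 2 / \<nu> t * (NN \<nu> t * (NN \<nu> 1 - NN \<nu> t)) / NN \<nu> 1 = valf t"
    using int_x1 by (simp add: valf_def NN_def[symmetric])
  then show ?thesis by (rule continuous_on_eq[OF c2])
qed

lemma valf_bdd: "bdd_above (valf ` {0..1})"
  by (rule bounded_imp_bdd_above[OF compact_imp_bounded[OF compact_continuous_image[OF valf_cont compact_Icc]]])

lemma valf_le: "t \<in> {0..1} \<Longrightarrow> valf t \<le> weight_const \<nu>"
  unfolding K_def by (rule cSUP_upper[OF _ valf_bdd])

lemma valf_half: "valf (1/2) > 0"
proof -
  have "valf (1/2) * \<nu> (1/2) > 0"
    using valf_eq[of "1/2"] NN_pos[of "1/2"] NN_lt[of "1/2"] M_pos by auto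
  then show ?thesis using pos[rule_format, of "1/2"] by (simp add: zero_less_mult_iff)
qed

lemma K_pos: "weight_const \<nu> > 0" using valf_le[of "1/2"] valf_half by auto

lemma inner:
  assumes t: "t \<in> {0..1}"
  shows "(\<integral>\<^sup>+x. ennreal (nub x / M * kern x t) \<partial>lborel) = ennreal (2 * NN \<nu> t * (M - NN \<nu> t) / M)"
proof -
  have a: "0 \<le> NN \<nu> t" "NN \<nu> t \<le> M" using t NN_ge0 NN_le_M by auto
  have e1: "(\<lambda>x. ennreal (nub x) * indicator {t..1} x) = (\<lambda>x. ennreal (\<nu> x) * indicator {t..1} x)"
    using t by (auto simp: fun_eq_iff nub_def indicator_def)
  have e2: "(\<lambda>x. ennreal (nub x) * indicator {0..t} x) = (\<lambda>x. ennreal (\<nu> x) * indicator {0..t} x)"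
    using t by (auto simp: fun_eq_iff nub_def indicator_def)
  have i1: "(\<integral>\<^sup>+x. ennreal (\<nu> x) * indicator {t..1} x \<partial>lborel) = ennreal (M - NN \<nu> t)"
    using nn_integral_has_integral_lebesgue'[OF _ integrable_integral[OF nu_int[of t 1]]] t pos int_x1[OF t]
    by (auto simp: less_imp_le)
  have i2: "(\<integral>\<^sup>+x. ennreal (\<nu> x) * indicator {0..t} x \<partial>lborel) = ennreal (NN \<nu> t)"
    using nn_integral_has_integral_lebesgue'[OF _ integrable_integral[OF nu_int[of 0 t]]] t pos
    by (auto simp: less_imp_le NN_def)
  have "(\<integral>\<^sup>+x. ennreal (nub x / M * kern x t) \<partial>lborel)
      = (\<integral>\<^sup>+x. ennreal (NN \<nu> t / M) * (ennreal (\<nu> x) * indicator {t..1} x)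
              + ennreal ((M - NN \<nu> t) / M) * (ennreal (\<nu> x) * indicator {0..t} x) \<partial>lborel)"
  proof (rule nn_integral_cong)
    fix x
    show "ennreal (nub x / M * kern x t) = ennreal (NN \<nu> t / M) * (ennreal (\<nu> x) * indicator {t..1} x)
              + ennreal ((M - NN \<nu> t) / M) * (ennreal (\<nu> x) * indicator {0..t} x)"
    proof (cases "x \<in> {0..1}")
      case True
      then have "\<nu> x > 0" using pos by auto
      then show ?thesis using True t a M_pos
        by (auto simp: nub_def kern_def Nb_def indicator_def ennreal_mult'[symmetric] ennreal_plus[symmetric]
                 simp del: ennreal_plus intro!: arg_cong[where f=ennreal]) (auto simp: field_simps)
    next
      case False
      then show ?thesis using t by (auto simp: nub_def indicator_def)
    qed
  qed
  also have "\<dots> = ennreal (NN \<nu> t / M) * ennreal (M - NN \<nu> t) + ennreal ((M - NN \<nu> t) / M) * ennreal (NN \<nu> t)"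
  proof -
    have m1: "(\<lambda>x. ennreal (\<nu> x) * indicator {t..1} x) \<in> borel_measurable lborel"
      unfolding e1[symmetric] by measurable
    have m2: "(\<lambda>x. ennreal (\<nu> x) * indicator {0..t} x) \<in> borel_measurable lborel"
      unfolding e2[symmetric] by measurable
    show ?thesis
      by (subst nn_integral_add) (use m1 m2 in \<open>auto simp: nn_integral_cmult i1 i2\<close>)
  qed
  also have "\<dots> = ennreal (2 * NN \<nu> t * (M - NN \<nu> t) / M)"
    using a M_pos by (simp add: ennreal_mult'[symmetric] ennreal_plus[symmetric] del: ennreal_plus)
  finally show ?thesis .
qed

lemma kern_nonneg: "0 \<le> kern x t"
  using NN_ge0[of t] NN_le_M[of t] M_pos by (auto simp: kern_def Nb_def indicator_def)

lemma kern_borel[measurable]: "(\<lambda>p. kern (fst p) (snd p)) \<in> borel_measurable (lborel \<Otimes>\<^sub>M lborel)"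
proof -
  have 1: "(\<lambda>p::real\<times>real. indicator {0..fst p} (snd p) :: real) \<in> borel_measurable (lborel \<Otimes>\<^sub>M lborel)"
    using ind_borel by (simp add: case_prod_beta')
  have 2: "(\<lambda>p::real\<times>real. indicator {fst p..1} (snd p) :: real) \<in> borel_measurable (lborel \<Otimes>\<^sub>M lborel)"
    using ind_borel2 by (simp add: case_prod_beta')
  show ?thesis unfolding kern_def using 1 2 by measurable
qed

lemma kern_borel1[measurable]: "kern x \<in> borel_measurable borel"
  unfolding kern_def by measurable

lemma part1:
  assumes adm: "admissible \<nu> f f'"
  shows "poincare_ineq \<nu> (weight_const \<nu>) f f'"
proof -
  define K where "K = weight_const \<nu>"
  define D where "D t = indicator {0..1} t * f' t" for t
  have Dm[measurable]: "D \<in> borel_measurable borel"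
    unfolding D_def using deriv_borel adm unfolding admissible_def by blast
  have cf: "continuous_on {0..1} f" by (rule adm_cont[OF adm])
  have fi: "(\<lambda>x. \<bar>f x\<bar> * \<nu> x) integrable_on {0..1}"
    by (rule integrable_continuous_interval) (intro continuous_intros cf cont)
  have "ennreal (integral {0..1} (\<lambda>x. \<bar>f x\<bar> * \<nu> x)) = (\<integral>\<^sup>+x. ennreal (\<bar>f x\<bar> * \<nu> x) * indicator {0..1} x \<partial>lborel)"
    by (rule nn_integral_has_integral_lebesgue'[symmetric]) (use pos fi in \<open>auto intro!: integrable_integral simp: less_imp_le\<close>)
  also have "\<dots> \<le> (\<integral>\<^sup>+x. ennreal (nub x / M) * (\<integral>\<^sup>+t. ennreal (\<bar>D t\<bar> * kern x t) \<partial>lborel) \<partial>lborel)"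
  proof (rule nn_integral_mono)
    fix x
    show "ennreal (\<bar>f x\<bar> * \<nu> x) * indicator {0..1} x \<le> ennreal (nub x / M) * (\<integral>\<^sup>+t. ennreal (\<bar>D t\<bar> * kern x t) \<partial>lborel)"
    proof (cases "x \<in> {0..1}")
      case True
      have nx: "\<nu> x > 0" using pos True by auto
      have "ennreal (\<bar>f x\<bar> * \<nu> x) * indicator {0..1} x = ennreal (nub x / M) * ennreal (M * \<bar>f x\<bar>)"
        using True nx M_pos by (simp add: nub_def ennreal_mult'[symmetric] del: ennreal_mult')
      also have "\<dots> \<le> ennreal (nub x / M) * (\<integral>\<^sup>+t. ennreal (\<bar>D t\<bar> * kern x t) \<partial>lborel)"
        using pointwise[OF adm True] unfolding D_def by (rule mult_left_mono) simp
      finally show ?thesis .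
    qed simp
  qed
  also have "\<dots> = (\<integral>\<^sup>+x. \<integral>\<^sup>+t. ennreal (nub x / M) * ennreal (\<bar>D t\<bar> * kern x t) \<partial>lborel \<partial>lborel)"
    by (rule nn_integral_cong, rule nn_integral_cmult[symmetric]) measurable
  also have "\<dots> = (\<integral>\<^sup>+t. \<integral>\<^sup>+x. ennreal (nub x / M) * ennreal (\<bar>D t\<bar> * kern x t) \<partial>lborel \<partial>lborel)"
  proof (rule lborel_pair.Fubini'[symmetric])
    show "(\<lambda>(x, t). ennreal (nub x / M) * ennreal (\<bar>D t\<bar> * kern x t)) \<in> borel_measurable (lborel \<Otimes>\<^sub>M lborel)"
      unfolding case_prod_beta' by measurable
  qed
  also have "\<dots> = (\<integral>\<^sup>+t. ennreal \<bar>D t\<bar> * \<integral>\<^sup>+x. ennreal (nub x / M * kern x t) \<partial>lborel \<partial>lborel)"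
  proof (rule nn_integral_cong)
    fix t
    have "(\<integral>\<^sup>+x. ennreal (nub x / M) * ennreal (\<bar>D t\<bar> * kern x t) \<partial>lborel)
        = (\<integral>\<^sup>+x. ennreal \<bar>D t\<bar> * ennreal (nub x / M * kern x t) \<partial>lborel)"
    proof (rule nn_integral_cong)
      fix x
      have "0 \<le> nub x" using pos by (auto simp: nub_def indicator_def less_imp_le)
      then show "ennreal (nub x / M) * ennreal (\<bar>D t\<bar> * kern x t) = ennreal \<bar>D t\<bar> * ennreal (nub x / M * kern x t)"
        using M_pos kern_nonneg[of x t] by (simp add: ennreal_mult'[symmetric] ennreal_mult[symmetric] mult_ac del: ennreal_mult')
    qed
    also have "\<dots> = ennreal \<bar>D t\<bar> * \<integral>\<^sup>+x. ennreal (nub x / M * kern x t) \<partial>lborel"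
    proof (rule nn_integral_cmult)
      have "(\<lambda>x. nub x / M * kern x t) \<in> borel_measurable borel"
      proof -
        have "(\<lambda>x. kern x t) = (\<lambda>x. (if 0 \<le> t \<and> t \<le> x then 1 else 0) * Nb t + (if x \<le> t \<and> t \<le> 1 then 1 else 0) * (M - Nb t))"
          by (auto simp: fun_eq_iff kern_def indicator_def)
        moreover have "(\<lambda>x. (if 0 \<le> t \<and> t \<le> x then 1 else 0) * Nb t + (if x \<le> t \<and> t \<le> 1 then 1 else 0) * (M - Nb t)) \<in> borel_measurable borel"
          by measurable
        ultimately have "(\<lambda>x. kern x t) \<in> borel_measurable borel" by simp
        then show ?thesis by measurable
      qed
      then show "(\<lambda>x. ennreal (nub x / M * kern x t)) \<in> borel_measurable lborel" by simp
    qed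
    finally show "(\<integral>\<^sup>+x. ennreal (nub x / M) * ennreal (\<bar>D t\<bar> * kern x t) \<partial>lborel)
        = ennreal \<bar>D t\<bar> * \<integral>\<^sup>+x. ennreal (nub x / M * kern x t) \<partial>lborel" .
  qed
  also have "\<dots> \<le> (\<integral>\<^sup>+t. ennreal K * (ennreal (\<bar>f' t\<bar> * \<nu> t) * indicator {0..1} t) \<partial>lborel)"
  proof (rule nn_integral_mono)
    fix t
    show "ennreal \<bar>D t\<bar> * (\<integral>\<^sup>+x. ennreal (nub x / M * kern x t) \<partial>lborel) \<le> ennreal K * (ennreal (\<bar>f' t\<bar> * \<nu> t) * indicator {0..1} t)"
    proof (cases "t \<in> {0..1}")
      case True
      have nt: "\<nu> t > 0" using pos True by auto
      have "ennreal \<bar>D t\<bar> * (\<integral>\<^sup>+x. ennreal (nub x / M * kern x t) \<partial>lborel) = ennreal \<bar>f' t\<bar> * ennreal (valf t * \<nu> t)"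
        unfolding inner[OF True] valf_eq[OF True] using True by (simp add: D_def)
      also have "\<dots> \<le> ennreal \<bar>f' t\<bar> * ennreal (K * \<nu> t)"
        using valf_le[OF True] nt unfolding K_def by (intro mult_left_mono ennreal_leI) auto
      also have "\<dots> = ennreal K * (ennreal (\<bar>f' t\<bar> * \<nu> t) * indicator {0..1} t)"
        using True nt K_pos unfolding K_def by (simp add: ennreal_mult'[symmetric] mult_ac del: ennreal_mult')
      finally show ?thesis .
    qed (simp add: D_def)
  qed
  also have "\<dots> = ennreal K * (\<integral>\<^sup>+t. ennreal (\<bar>f' t\<bar> * \<nu> t) * indicator {0..1} t \<partial>lborel)"
  proof (rule nn_integral_cmult)
    have "(\<lambda>t. ennreal (\<bar>f' t\<bar> * \<nu> t) * indicator {0..1} t) = (\<lambda>t. ennreal (\<bar>D t\<bar> * nub t))"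
      by (auto simp: fun_eq_iff D_def nub_def indicator_def abs_mult)
    moreover have "(\<lambda>t. ennreal (\<bar>D t\<bar> * nub t)) \<in> borel_measurable lborel" by measurable
    ultimately show "(\<lambda>t. ennreal (\<bar>f' t\<bar> * \<nu> t) * indicator {0..1} t) \<in> borel_measurable lborel" by simp
  qed
  finally show ?thesis unfolding poincare_ineq_def K_def .
qed

end


context wt begin

lemma cont_sub_int:
  fixes g :: "real \<Rightarrow> real"
  assumes "continuous_on {0..1} g" "0 \<le> u" "w \<le> 1" shows "g integrable_on {u..w}"
  by (rule integrable_continuous_interval) (use assms in \<open>auto intro: continuous_on_subset\<close>)

lemma part2:
  assumes CK: "C < weight_const \<nu>"
  shows "\<exists>f f'. admissible \<nu> f f' \<and> \<not> poincare_ineq \<nu> C f f'"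
proof -
  define C' where "C' = max C 0"
  have C'0: "0 \<le> C'" unfolding C'_def by simp
  have C'K: "C' < weight_const \<nu>" using CK K_pos unfolding C'_def by simp
  obtain a where a01: "a \<in> {0..1}" and Ca: "C' < valf a"
    using C'K unfolding K_def using less_cSUP_iff[OF _ valf_bdd] by auto
  have na: "\<nu> a > 0" using pos a01 by auto
  have va: "valf a * \<nu> a = 2 * NN \<nu> a * (M - NN \<nu> a) / M" by (rule valf_eq[OF a01])
  have "valf a * \<nu> a > 0" using Ca C'0 na by simp
  then have a0: "a \<noteq> 0" and a1: "a \<noteq> 1" using va by (auto simp: NN0)
  then have aI: "0 < a" "a < 1" using a01 by auto
  define Na where "Na = NN \<nu> a"
  have Na: "0 < Na" "Na < M" using NN_pos[of a] NN_lt[of a] aI unfolding Na_def by auto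
  define gap where "gap = valf a * \<nu> a - C' * \<nu> a"
  have gap: "gap > 0" using Ca na unfolding gap_def by (simp add: algebra_simps)
  define \<epsilon> where "\<epsilon> = gap / (2 * (C' + 1))"
  have eps: "\<epsilon> > 0" "C' * \<epsilon> < gap / 2"
    using gap C'0 by (auto simp: \<epsilon>_def field_simps)
  obtain d where d: "d > 0" "\<And>y. y \<in> {0..1} \<Longrightarrow> dist y a < d \<Longrightarrow> dist (\<nu> y) (\<nu> a) < \<epsilon>"
    using cont a01 eps(1) unfolding continuous_on_iff by blast
  obtain V where V: "\<And>x. x \<in> {0..1} \<Longrightarrow> \<nu> x \<le> V" using nu_max by blast
  have Vpos: "V > 0" using V[OF a01] na by simp
  define \<delta> where "\<delta> = min (d/2) (min ((1-a)/2) (gap * M / (8 * Na * V)))"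
  have dpos: "\<delta> > 0" using d aI gap Na Vpos M_pos by (auto simp: \<delta>_def)
  have dd: "\<delta> < d" "a + \<delta> < 1"
  proof -
    have "\<delta> \<le> d/2" "\<delta> \<le> (1-a)/2" unfolding \<delta>_def by (meson min.cobounded1 min.cobounded2 order_trans)+
    then show "\<delta> < d" "a + \<delta> < 1" using d aI by auto
  qed
  have dg: "2 * Na * V * \<delta> / M \<le> gap / 4"
  proof -
    have "\<delta> \<le> gap * M / (8 * Na * V)" unfolding \<delta>_def by auto
    then have "2 * Na * V * \<delta> \<le> 2 * Na * V * (gap * M / (8 * Na * V))"
      using Na Vpos by (intro mult_left_mono) auto
    also have "\<dots> = gap * M / 4" using Na Vpos by (simp add: field_simps)
    finally show ?thesis using M_pos by (simp add: field_simps)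
  qed
  define b where "b = a + \<delta>"
  have ab: "a < b" "b < 1" using dpos dd unfolding b_def by auto
  define S where "S = stp a b"
  define S' where "S' = stpd a b"
  have Sd: "(S has_real_derivative S' x) (at x)" for x unfolding S_def S'_def by (rule stp_deriv[OF ab(1)])
  have Scont: "continuous_on {0..1} S"
    using Sd by (meson DERIV_continuous continuous_at_imp_continuous_on)
  have SnuI: "(\<lambda>x. S x * \<nu> x) integrable_on {u..w}" if "0 \<le> u" "w \<le> 1" for u w
    by (rule cont_sub_int) (use that in \<open>auto intro!: continuous_intros Scont cont\<close>)
  define c where "c = integral {0..1} (\<lambda>x. S x * \<nu> x) / M"
  define f where "f x = S x - c" for x
  have adm: "admissible \<nu> f S'"
    unfolding admissible_def
  proof
    show "\<forall>x\<in>{0..1}. (f has_real_derivative S' x) (at x within {0..1})"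
    proof
      fix x
      have "((\<lambda>x. S x - c) has_real_derivative S' x - 0) (at x)" by (rule DERIV_diff[OF Sd DERIV_const])
      then show "(f has_real_derivative S' x) (at x within {0..1})"
        unfolding f_def by (simp add: has_field_derivative_at_within)
    qed
    have "integral {0..1} (\<lambda>x. f x * \<nu> x) = integral {0..1} (\<lambda>x. S x * \<nu> x - c * \<nu> x)"
      unfolding f_def by (simp add: algebra_simps)
    also have "\<dots> = integral {0..1} (\<lambda>x. S x * \<nu> x) - c * M"
    proof -
      have i: "(\<lambda>x. c * \<nu> x) integrable_on {0..1}" using nu_int[of 0 1] using integrable_on_mult_right by blast
      show ?thesis by (simp add: integral_diff[OF SnuI[of 0 1] i] NN_def)
    qed
    also have "\<dots> = 0" using M_pos unfolding c_def by simp
    finally show "integral {0..1} (\<lambda>x. f x * \<nu> x) = 0" .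
  qed
  define Nb where "Nb = NN \<nu> b"
  have Iab: "integral {a..b} \<nu> = Nb - Na"
    using Henstock_Kurzweil_Integration.integral_combine[of 0 a b \<nu>] nu_int[of 0 b] aI ab
    unfolding Na_def Nb_def NN_def by auto
  have Ib1: "integral {b..1} \<nu> = M - Nb" using int_x1[of b] ab aI unfolding Nb_def by auto
  have NbV: "Nb - Na \<le> V * \<delta>"
  proof -
    have "integral {a..b} \<nu> \<le> integral {a..b} (\<lambda>x. V)"
      by (rule integral_le) (use nu_int[of a b] aI ab V in auto)
    then show ?thesis using Iab ab unfolding b_def by (simp add: mult.commute)
  qed
  have NbM: "Nb \<le> M" using NN_le_M[of b] ab aI unfolding Nb_def by auto
  have NaNb: "Na \<le> Nb" using NN_mono[of a b] ab aI unfolding Na_def Nb_def by auto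
  have split3: "integral {0..1} g = integral {0..a} g + integral {a..b} g + integral {b..1} g"
    if "continuous_on {0..1} g" for g :: "real \<Rightarrow> real"
  proof -
    have "integral {0..a} g + integral {a..1} g = integral {0..1} g"
      by (rule Henstock_Kurzweil_Integration.integral_combine) (use aI cont_sub_int[OF that] in auto)
    moreover have "integral {a..b} g + integral {b..1} g = integral {a..1} g"
      by (rule Henstock_Kurzweil_Integration.integral_combine) (use aI ab cont_sub_int[OF that] in auto)
    ultimately show ?thesis by simp
  qed
  have Sn_cont: "continuous_on {0..1} (\<lambda>x. S x * \<nu> x)" by (intro continuous_intros Scont cont)
  have S0a: "integral {0..a} (\<lambda>x. S x * \<nu> x) = 0"
    by (subst integral_cong[where g="\<lambda>x. 0"]) (auto simp: S_def stp_le)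
  have Sb1: "integral {b..1} (\<lambda>x. S x * \<nu> x) = M - Nb"
    by (subst integral_cong[where g="\<nu>"]) (use ab Ib1 in \<open>auto simp: S_def stp_ge\<close>)
  have Sab: "0 \<le> integral {a..b} (\<lambda>x. S x * \<nu> x)" "integral {a..b} (\<lambda>x. S x * \<nu> x) \<le> Nb - Na"
  proof -
    show "0 \<le> integral {a..b} (\<lambda>x. S x * \<nu> x)"
      by (rule integral_nonneg) (use SnuI aI ab stp_range[OF ab(1)] pos in \<open>auto simp: S_def less_imp_le\<close>)
    have "integral {a..b} (\<lambda>x. S x * \<nu> x) \<le> integral {a..b} \<nu>"
    proof (rule integral_le)
      show "(\<lambda>x. S x * \<nu> x) integrable_on {a..b}" using SnuI aI ab by auto
      show "\<nu> integrable_on {a..b}" using nu_int aI ab by auto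
      fix x assume "x \<in> {a..b}"
      then have "0 < \<nu> x" using pos aI ab by auto
      then show "S x * \<nu> x \<le> \<nu> x" using stp_range[OF ab(1), of x] unfolding S_def
        by (simp add: mult_le_cancel_right1)
    qed
    then show "integral {a..b} (\<lambda>x. S x * \<nu> x) \<le> Nb - Na" using Iab by simp
  qed
  have cM: "M - Nb \<le> c * M" "c * M \<le> M - Na"
    using split3[OF Sn_cont] S0a Sb1 Sab M_pos unfolding c_def by auto
  define I where "I = integral {0..1} (\<lambda>x. \<bar>f x\<bar> * \<nu> x)"
  have fcont: "continuous_on {0..1} (\<lambda>x. \<bar>f x\<bar> * \<nu> x)"
    unfolding f_def by (intro continuous_intros Scont cont)
  have f0a: "integral {0..a} (\<lambda>x. \<bar>f x\<bar> * \<nu> x) = \<bar>c\<bar> * Na"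
  proof -
    have "integral {0..a} (\<lambda>x. \<bar>f x\<bar> * \<nu> x) = integral {0..a} (\<lambda>x. \<bar>c\<bar> * \<nu> x)"
      by (rule integral_cong) (auto simp: f_def S_def stp_le)
    then show ?thesis unfolding Na_def NN_def by simp
  qed
  have fb1: "integral {b..1} (\<lambda>x. \<bar>f x\<bar> * \<nu> x) = \<bar>1 - c\<bar> * (M - Nb)"
  proof -
    have "integral {b..1} (\<lambda>x. \<bar>f x\<bar> * \<nu> x) = integral {b..1} (\<lambda>x. \<bar>1 - c\<bar> * \<nu> x)"
      by (rule integral_cong) (use ab in \<open>auto simp: f_def S_def stp_ge\<close>)
    then show ?thesis using Ib1 by simp
  qed
  have fab: "0 \<le> integral {a..b} (\<lambda>x. \<bar>f x\<bar> * \<nu> x)"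
    by (rule integral_nonneg) (use cont_sub_int[OF fcont] aI ab pos in \<open>auto simp: less_imp_le\<close>)
  have I1: "I \<ge> \<bar>c\<bar> * Na + \<bar>1 - c\<bar> * (M - Nb)"
    using split3[OF fcont] f0a fb1 fab unfolding I_def by linarith
  have c1: "c * Na \<ge> (M - Nb) / M * Na"
    using cM M_pos Na by (intro mult_right_mono) (auto simp: field_simps)
  have c2: "(1 - c) * (M - Nb) \<ge> Na / M * (M - Nb)"
    using cM M_pos NbM by (intro mult_right_mono) (auto simp: field_simps)
  have I2: "I \<ge> 2 * Na * (M - Nb) / M"
  proof -
    have "\<bar>c\<bar> * Na \<ge> c * Na" using Na by (intro mult_right_mono) auto
    moreover have "\<bar>1 - c\<bar> * (M - Nb) \<ge> (1 - c) * (M - Nb)" using NbM by (intro mult_right_mono) auto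
    moreover have "(M - Nb) / M * Na + Na / M * (M - Nb) = 2 * Na * (M - Nb) / M"
      by (simp add: field_simps)
    ultimately show ?thesis using I1 c1 c2 by linarith
  qed
  have I3: "2 * Na * (M - Nb) / M \<ge> 2 * Na * (M - Na) / M - 2 * Na * V * \<delta> / M"
  proof -
    have "2 * Na * (M - Nb) \<ge> 2 * Na * (M - Na - V * \<delta>)" using NbV Na by (intro mult_left_mono) auto
    then have "2 * Na * (M - Na - V * \<delta>) / M \<le> 2 * Na * (M - Nb) / M"
      using M_pos by (intro divide_right_mono) auto
    moreover have "2 * Na * (M - Na) / M - 2 * Na * V * \<delta> / M = 2 * Na * (M - Na - V * \<delta>) / M"
      by (simp add: diff_divide_distrib[symmetric] algebra_simps)
    ultimately show ?thesis by linarith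
  qed
  have Ibig: "I \<ge> C' * \<nu> a + 3 * gap / 4"
  proof -
    have va': "valf a * \<nu> a = 2 * Na * (M - Na) / M" using va unfolding Na_def .
    show ?thesis using I2 I3 dg va' gap_def by linarith
  qed
  have Sint: "((\<lambda>t. S' t * (\<nu> a + \<epsilon>)) has_integral (S b - S a) * (\<nu> a + \<epsilon>)) {a..b}"
  proof -
    have "(S' has_integral (S b - S a)) {a..b}"
      by (rule fundamental_theorem_of_calculus)
        (use ab Sd in \<open>auto simp: has_real_derivative_iff_has_vector_derivative intro: has_vector_derivative_at_within\<close>)
    then show ?thesis by (rule has_integral_mult_left)
  qed
  have Sba: "S b - S a = 1" unfolding S_def using stp_a stp_b[OF ab(1)] by simp
  have R: "(\<integral>\<^sup>+t\<in>{0..1}. ennreal (\<bar>S' t\<bar> * \<nu> t) \<partial>lborel) \<le> ennreal (\<nu> a + \<epsilon>)"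
  proof -
    have "(\<integral>\<^sup>+t\<in>{0..1}. ennreal (\<bar>S' t\<bar> * \<nu> t) \<partial>lborel)
        \<le> (\<integral>\<^sup>+t. ennreal (S' t * (\<nu> a + \<epsilon>)) * indicator {a..b} t \<partial>lborel)"
    proof (rule nn_integral_mono)
      fix t
      show "ennreal (\<bar>S' t\<bar> * \<nu> t) * indicator {0..1} t \<le> ennreal (S' t * (\<nu> a + \<epsilon>)) * indicator {a..b} t"
      proof (cases "t \<in> {a..b}")
        case True
        then have t01: "t \<in> {0..1}" using aI ab by auto
        have "dist t a < d" using True dd unfolding b_def dist_real_def by auto
        then have "\<nu> t \<le> \<nu> a + \<epsilon>" using d(2)[OF t01] by (auto simp: dist_real_def)
        moreover have "0 \<le> S' t" unfolding S'_def by (rule stpd_nonneg[OF ab(1)])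
        ultimately have "\<bar>S' t\<bar> * \<nu> t \<le> S' t * (\<nu> a + \<epsilon>)" by (simp add: mult_left_mono)
        then show ?thesis using True t01 by (simp add: ennreal_leI)
      next
        case False
        then show ?thesis unfolding S'_def by (simp add: stpd_out)
      qed
    qed
    also have "\<dots> = ennreal ((S b - S a) * (\<nu> a + \<epsilon>))"
      by (rule nn_integral_has_integral_lebesgue'[OF _ Sint])
        (use stpd_nonneg[OF ab(1)] na eps in \<open>auto simp: S'_def\<close>)
    finally show ?thesis using Sba by simp
  qed
  have notp: "\<not> poincare_ineq \<nu> C f S'"
  proof
    assume p: "poincare_ineq \<nu> C f S'"
    have eC: "ennreal C = ennreal C'" unfolding C'_def by (cases "C \<le> 0") (auto simp: ennreal_neg)
    have "ennreal I \<le> ennreal C' * (\<integral>\<^sup>+t\<in>{0..1}. ennreal (\<bar>S' t\<bar> * \<nu> t) \<partial>lborel)"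
      using p unfolding poincare_ineq_def I_def eC .
    also have "\<dots> \<le> ennreal C' * ennreal (\<nu> a + \<epsilon>)" by (rule mult_left_mono[OF R]) simp
    also have "\<dots> = ennreal (C' * (\<nu> a + \<epsilon>))" using C'0 by (simp add: ennreal_mult')
    finally have "I \<le> C' * (\<nu> a + \<epsilon>)"
      using C'0 na eps by (subst (asm) ennreal_le_iff) auto
    moreover have "C' * (\<nu> a + \<epsilon>) = C' * \<nu> a + C' * \<epsilon>" by (simp add: algebra_simps)
    ultimately show False using Ibig eps gap by linarith
  qed
  show ?thesis using adm notp by blast
qed

end

theorem theorem6:
  fixes \<nu> :: "real \<Rightarrow> real"
  assumes "continuous_on {0..1} \<nu>"
    and "\<forall>x\<in>{0..1}. \<nu> x > 0"
  shows "(\<forall>f f'. admissible \<nu> f f' \<longrightarrow> poincare_ineq \<nu> (weight_const \<nu>) f f')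
       \<and> (\<forall>C < weight_const \<nu>. \<exists>f f'. admissible \<nu> f f' \<and> \<not> poincare_ineq \<nu> C f f')"
proof -
  interpret wt \<nu> using assms by unfold_locales
  show ?thesis using part1 part2 by blast
qed

end
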